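(* For every integer $d>2$, the number of $(d,d)$-necklaces (circular arrangements of $d$ white and $d$ black beads, modulo cyclic rotation, with no primitivity requirement) is even. *)

theory Defs
  imports Main
begin

text \<open>Binary words of length 2d with exactly d white beads (True) and d black beads (False).\<close>
definition balanced_words :: "nat \<Rightarrow> bool list set" where
  "balanced_words d = {w. length w = 2 * d \<and> count_list w True = d}"

definition rot_rel :: "nat \<Rightarrow> (bool list \<times> bool list) set" where
  "rot_rel d = {(u, v). u \<in> balanced_words d \<and> v \<in> balanced_words d \<and> (\<exists>k. v = rotate k u)}"

definition necklaces :: "nat \<Rightarrow> bool list set set" where
  "necklaces d = balanced_words d // rot_rel d"

end

theory Submission
  imports Defs "HOL-Number_Theory.Number_Theory"
begin


definition orb :: "bool list \<Rightarrow> bool list set" where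
  "orb w = range (\<lambda>k. rotate k w)"

lemma count_rotate: "count_list (rotate k w) x = count_list w x"
proof -
  have "count_list w x = count_list (take (k mod length w) w @ drop (k mod length w) w) x"
    by simp
  then show ?thesis by (simp add: rotate_drop_take add.commute del: append_take_drop_id)
qed

lemma count_not: "count_list (map Not w) True = count_list w False"
  by (induction w) auto

lemma count_tf: "count_list w True + count_list w False = length w"
  by (induction w) auto

lemma rotate_in_bw: "w \<in> balanced_words d \<Longrightarrow> rotate k w \<in> balanced_words d"
  by (simp add: balanced_words_def count_rotate)

lemma not_in_bw: "w \<in> balanced_words d \<Longrightarrow> map Not w \<in> balanced_words d"
  using count_tf[of w] by (simp add: balanced_words_def count_not)

lemma necklaces_eq: "necklaces d = orb ` balanced_words d"
proof -
  have "rot_rel d `` {w} = orb w" if "w \<in> balanced_words d" for w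
    using that rotate_in_bw by (auto simp: rot_rel_def orb_def)
  then show ?thesis
    unfolding necklaces_def quotient_def by auto
qed

lemma orb_map: "map Not ` orb w = orb (map Not w)"
  by (auto simp: orb_def rotate_map)

lemma orb_rotate: "orb (rotate i w) = orb w"
proof -
  have "rotate k (rotate i w) \<in> orb w" for k
    by (simp add: orb_def rotate_rotate)
  moreover have "rotate k w \<in> orb (rotate i w)" for k
  proof (cases "w = []")
    case True then show ?thesis by (simp add: orb_def)
  next
    case False
    define n where "n = length w"
    have "rotate (k + (n - i mod n)) (rotate i w) = rotate (k + (n - i mod n) + i) w"
      by (simp add: rotate_rotate add.commute add.left_commute)
    also have "\<dots> = rotate k w"
    proof -
      have np: "n > 0" using False n_def by simp
      have "i mod n < n" using np by simp
      moreover have h: "n * (i div n) + i mod n = i" by (rule mult_div_mod_eq)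
      ultimately have eq: "k + (n - i mod n) + i = k + n * (i div n) + n"
        by linarith
      have "(k + n * (i div n) + n) mod n = k mod n" by simp
      then have "(k + (n - i mod n) + i) mod n = k mod n" by (simp only: eq)
      then show ?thesis using rotate_conv_mod[of "k + (n - i mod n) + i" w]
          rotate_conv_mod[of k w] n_def by simp
    qed
    finally have e: "rotate (k + (n - i mod n)) (rotate i w) = rotate k w" .
    show ?thesis unfolding orb_def image_iff using e[symmetric] by blast
  qed
  ultimately show ?thesis by (auto simp: orb_def)
qed

lemma self_orb: "w \<in> orb w"
proof -
  have "rotate 0 w \<in> orb w" unfolding orb_def by (rule rangeI)
  then show ?thesis by simp
qed

lemma orb_eq_iff: "v \<in> orb w \<Longrightarrow> orb v = orb w"
proof -
  assume "v \<in> orb w"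
  then obtain k where "v = rotate k w" by (auto simp: orb_def)
  then show ?thesis by (simp add: orb_rotate)
qed

lemma involution_parity:
  assumes "finite A" "\<And>x. x \<in> A \<Longrightarrow> f x \<in> A" "\<And>x. x \<in> A \<Longrightarrow> f (f x) = x"
  shows "even (card {x\<in>A. f x \<noteq> x})"
proof -
  have main: "even (card B)" if "finite B" "\<And>x. x\<in>B \<Longrightarrow> f x \<in> B"
      "\<And>x. x\<in>B \<Longrightarrow> f (f x) = x" "\<And>x. x\<in>B \<Longrightarrow> f x \<noteq> x" for B
    using that
  proof (induction "card B" arbitrary: B rule: less_induct)
    case less
    show ?case
    proof (cases "B = {}")
      case True then show ?thesis by simp
    next
      case False
      then obtain x where x: "x \<in> B" by blast
      let ?B = "B - {x, f x}"
      have fx: "f x \<in> B" "f x \<noteq> x" using less.prems(2,4) x by blast+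
      have sub: "{x, f x} \<subseteq> B" using x fx by blast
      have "card {x, f x} = 2" using fx(2) by simp
      then have c: "card B = card ?B + 2"
        using card_Diff_subset[OF _ sub] card_mono[OF less.prems(1) sub] by simp
      have "even (card ?B)"
      proof (rule less.hyps)
        show "card ?B < card B" using c by simp
        show "finite ?B" using less.prems(1) by simp
      next
        fix y assume y: "y \<in> ?B"
        then have yB: "y \<in> B" "y \<noteq> x" "y \<noteq> f x" by auto
        have 1: "f y \<in> B" using less.prems(2) yB(1) by blast
        have 2: "f (f y) = y" using less.prems(3) yB(1) by blast
        have 3: "f x \<noteq> f y" using yB less.prems(3) x by metis
        have 4: "x \<noteq> f y" using yB 2 by metis
        show "f y \<in> ?B" using 1 3 4 by auto
        show "f (f y) = y" by (rule 2)
        show "f y \<noteq> y" using less.prems(4) yB(1) by blast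
      qed
      then show ?thesis using c by simp
    qed
  qed
  show ?thesis
    by (rule main) (use assms in auto)
qed

lemma inj_rotate: "inj (rotate i :: 'a list \<Rightarrow> 'a list)"
proof (induction i)
  case 0 then show ?case by simp
next
  case (Suc i)
  have "rotate (Suc i) = rotate1 \<circ> (rotate i :: 'a list \<Rightarrow> 'a list)" by auto
  then show ?case using Suc inj_rotate1 by (metis inj_compose)
qed

lemma orb_fin: "w \<noteq> [] \<Longrightarrow> orb w = (\<lambda>k. rotate k w) ` {..<length w}"
proof -
  assume w: "w \<noteq> []"
  have "rotate k w \<in> (\<lambda>k. rotate k w) ` {..<length w}" for k
  proof -
    have "k mod length w < length w" using w by simp
    then show ?thesis using rotate_conv_mod[of k w] by blast
  qed
  then show ?thesis unfolding orb_def by auto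
qed

lemma inj_mod_add: "inj_on (\<lambda>i. (i + c) mod (n::nat)) {..<n}"
proof (rule inj_onI)
  fix x y assume "x \<in> {..<n}" "y \<in> {..<n}" "(x + c) mod n = (y + c) mod n"
  then have "[x + c = y + c] (mod n)" "x < n" "y < n" by (auto simp: cong_def)
  then show "x = y" using cong_add_rcancel_nat cong_less_modulus_unique_nat by blast
qed

definition rfib :: "bool list \<Rightarrow> bool list \<Rightarrow> nat set" where
  "rfib w x = {i. i < length w \<and> rotate i w = x}"

lemma rfib_le:
  assumes "w \<noteq> []" "x \<in> orb w" "y \<in> orb w"
  shows "card (rfib w x) \<le> card (rfib w y)"
proof -
  define n where "n = length w"
  have n: "n > 0" using assms n_def by auto
  obtain ix where ix: "ix < n" "rotate ix w = x" using assms orb_fin n_def by auto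
  obtain iy where iy: "iy < n" "rotate iy w = y" using assms orb_fin n_def by auto
  define h where "h i = (i + ((n - ix) + iy)) mod n" for i
  have "inj_on h (rfib w x)"
    using inj_mod_add[of "(n - ix) + iy" n] unfolding h_def rfib_def n_def
    by (auto intro: inj_on_subset)
  moreover have "h ` rfib w x \<subseteq> rfib w y"
  proof
    fix k assume "k \<in> h ` rfib w x"
    then obtain i where i: "i < n" "rotate i w = x" "k = h i"
      unfolding rfib_def n_def by auto
    have "rotate k w = rotate (i + ((n - ix) + iy)) w"
      using i(3) rotate_conv_mod[of "i + ((n - ix) + iy)" w] unfolding h_def n_def by simp
    also have "\<dots> = rotate iy (rotate (n - ix) (rotate i w))"
      by (simp add: rotate_rotate algebra_simps)
    also have "\<dots> = rotate iy (rotate (n - ix + ix) w)"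
      using i(2) ix(2) by (metis rotate_rotate)
    also have "\<dots> = y" using ix(1) iy(2) n_def by simp
    finally show "k \<in> rfib w y" using n i(3) unfolding rfib_def h_def n_def by simp
  qed
  moreover have "finite (rfib w y)" unfolding rfib_def by simp
  ultimately show ?thesis
    by (rule card_inj_on_le)
qed

lemma rfib_eq:
  assumes "w \<noteq> []" "x \<in> orb w"
  shows "card (rfib w x) = card (rfib w w)"
proof -
  have "rotate 0 w \<in> orb w" unfolding orb_def by (rule rangeI)
  then have w: "w \<in> orb w" by simp
  show ?thesis using rfib_le[OF assms(1) assms(2) w] rfib_le[OF assms(1) w assms(2)] by simp
qed

lemma orbit_stab:
  assumes "w \<noteq> []"
  shows "card (orb w) * card (rfib w w) = length w"
proof -
  define n where "n = length w"
  let ?f = "\<lambda>k. rotate k w"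
  have "n = card {..<n}" by simp
  also have "\<dots> = (\<Sum>y\<in>?f ` {..<n}. card {x. x \<in> {..<n} \<and> ?f x = y})"
    using sum.image_gen[of "{..<n}" "\<lambda>_. 1::nat" ?f] by simp
  also have "\<dots> = (\<Sum>y\<in>orb w. card (rfib w y))"
    using orb_fin[OF assms] by (simp add: rfib_def n_def)
  also have "\<dots> = (\<Sum>y\<in>orb w. card (rfib w w))"
    using rfib_eq[OF assms] by simp
  finally show ?thesis by (simp add: n_def)
qed


definition hc :: "bool list \<Rightarrow> nat" where
  "hc w = card {j. j < length w \<and> rotate j w = map Not w}"

lemma hc_rotate: "hc (rotate i w) = hc w"
proof -
  have "(rotate j (rotate i w) = map Not (rotate i w)) \<longleftrightarrow> (rotate j w = map Not w)" for j
  proof -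
    have "rotate j (rotate i w) = rotate i (rotate j w)" by (simp add: rotate_rotate add.commute)
    moreover have "map Not (rotate i w) = rotate i (map Not w)" by (simp add: rotate_map)
    ultimately show ?thesis using inj_rotate[of i] by (metis injD)
  qed
  then show ?thesis unfolding hc_def by simp
qed

lemma hc_w: "w \<noteq> [] \<Longrightarrow> hc w = (if map Not w \<in> orb w then card (rfib w w) else 0)"
proof -
  assume w: "w \<noteq> []"
  have "hc w = card (rfib w (map Not w))" unfolding hc_def rfib_def by simp
  moreover have "rfib w (map Not w) = {}" if "map Not w \<notin> orb w"
  proof -
    have "False" if "rotate i w = map Not w" for i
      using that \<open>map Not w \<notin> orb w\<close> unfolding orb_def image_iff by (metis UNIV_I)
    then show ?thesis unfolding rfib_def by blast
  qed
  ultimately show ?thesis using rfib_eq[OF w] by auto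
qed

lemma sum_orb:
  assumes w: "w \<noteq> []"
  shows "(\<Sum>v\<in>orb w. hc v) = (if map Not ` orb w = orb w then length w else 0)"
proof -
  have "(\<Sum>v\<in>orb w. hc v) = (\<Sum>v\<in>orb w. hc w)"
    by (rule sum.cong) (auto simp: orb_def hc_rotate)
  also have "\<dots> = card (orb w) * hc w" by simp
  also have "\<dots> = (if map Not w \<in> orb w then length w else 0)"
    using hc_w[OF w] orbit_stab[OF w] by simp
  also have "(map Not w \<in> orb w) = (map Not ` orb w = orb w)"
  proof
    assume "map Not w \<in> orb w"
    then show "map Not ` orb w = orb w" using orb_map orb_eq_iff by metis
  next
    assume "map Not ` orb w = orb w"
    moreover have "w \<in> orb w" by (rule self_orb)
    ultimately show "map Not w \<in> orb w" by blast
  qed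
  finally show ?thesis .
qed

lemma finite_len: "finite {w :: bool list. length w = n}"
  using finite_lists_length_eq[of "UNIV :: bool set" n] by simp

lemma burnside:
  assumes d: "d > 0"
  shows "(\<Sum>j<2*d. card {w. length w = 2*d \<and> map Not (rotate j w) = w})
       = 2 * d * card {X \<in> necklaces d. map Not ` X = X}"
proof -
  define n where "n = 2 * d"
  define L where "L = {w :: bool list. length w = n}"
  have fL: "finite L" unfolding L_def by (rule finite_len)
  have n0: "n > 0" using d n_def by simp
  have eqv: "(map Not (rotate j w) = w) \<longleftrightarrow> (rotate j w = map Not w)" for j w
  proof
    assume "map Not (rotate j w) = w"
    then have "map Not (map Not (rotate j w)) = map Not w" by simp
    then show "rotate j w = map Not w" by (simp add: comp_def)
  next
    assume "rotate j w = map Not w"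
    then show "map Not (rotate j w) = w" by (simp add: comp_def)
  qed
  have "(\<Sum>j<n. card {w. length w = n \<and> map Not (rotate j w) = w})
      = (\<Sum>j\<in>{..<n}. card {w\<in>L. rotate j w = map Not w})"
    unfolding L_def using eqv by (intro sum.cong) auto
  also have "\<dots> = (\<Sum>w\<in>L. hc w)"
  proof (rule sum_multicount_gen)
    show "finite {..<n}" by simp
    show "finite L" by (rule fL)
    show "\<forall>w\<in>L. card {j \<in> {..<n}. rotate j w = map Not w} = hc w"
      unfolding L_def hc_def by auto
  qed
  also have "\<dots> = (\<Sum>X\<in>orb ` L. sum hc {x. x \<in> L \<and> orb x = X})"
    by (rule sum.image_gen[OF fL])
  also have "\<dots> = (\<Sum>X\<in>orb ` L. if map Not ` X = X then n else 0)"
  proof (rule sum.cong)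
    fix X assume "X \<in> orb ` L"
    then obtain w where w: "w \<in> L" "X = orb w" by auto
    have wne: "w \<noteq> []" using w n0 unfolding L_def by auto
    have "{x. x \<in> L \<and> orb x = X} = orb w"
    proof
      show "{x. x \<in> L \<and> orb x = X} \<subseteq> orb w"
      proof
        fix x assume "x \<in> {x. x \<in> L \<and> orb x = X}"
        then have "orb x = orb w" using w by auto
        moreover have "x \<in> orb x" by (rule self_orb)
        ultimately show "x \<in> orb w" by simp
      qed
      show "orb w \<subseteq> {x. x \<in> L \<and> orb x = X}"
      proof
        fix x assume x: "x \<in> orb w"
        then have "orb x = X" using w orb_eq_iff by simp
        moreover have "length x = length w" using x unfolding orb_def by auto
        ultimately show "x \<in> {x. x \<in> L \<and> orb x = X}" using w unfolding L_def by simp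
      qed
    qed
    then show "sum hc {x. x \<in> L \<and> orb x = X} = (if map Not ` X = X then n else 0)"
      using sum_orb[OF wne] w L_def by simp
  qed simp
  also have "\<dots> = n * card {X \<in> orb ` L. map Not ` X = X}"
    using fL by (simp add: sum.If_cases Int_def conj_commute)
  also have "{X \<in> orb ` L. map Not ` X = X} = {X \<in> necklaces d. map Not ` X = X}"
  proof -
    have "orb w \<in> orb ` balanced_words d" if "w \<in> L" "map Not ` orb w = orb w" for w
    proof -
      have "map Not w \<in> orb w" using that(2) self_orb[of w] by blast
      then obtain k where k: "map Not w = rotate k w" unfolding orb_def by auto
      have "count_list w False = count_list w True"
        using count_not[of w] k count_rotate[of k w True] by simp
      then have "w \<in> balanced_words d"
        using count_tf[of w] that(1) unfolding L_def n_def balanced_words_def by simp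
      then show ?thesis by simp
    qed
    moreover have "balanced_words d \<subseteq> L" unfolding L_def n_def balanced_words_def by auto
    ultimately show ?thesis unfolding necklaces_eq by blast
  qed
  finally show ?thesis unfolding n_def .
qed




lemma fixP_iff:
  assumes "length w = n" "n > 0"
  shows "(map Not (rotate j w) = w) \<longleftrightarrow> (\<forall>i. w ! ((i + j) mod n) = (\<not> w ! (i mod n)))"
proof
  assume h: "map Not (rotate j w) = w"
  show "\<forall>i. w ! ((i + j) mod n) = (\<not> w ! (i mod n))"
  proof
    fix i
    have i: "i mod n < n" using assms by simp
    have "w ! (i mod n) = map Not (rotate j w) ! (i mod n)" using h by simp
    also have "\<dots> = (\<not> w ! ((j + i mod n) mod n))" using i assms by (simp add: nth_rotate)
    also have "(j + i mod n) mod n = (i + j) mod n" by (simp add: mod_add_right_eq add.commute)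
    finally show "w ! ((i + j) mod n) = (\<not> w ! (i mod n))" by simp
  qed
next
  assume h: "\<forall>i. w ! ((i + j) mod n) = (\<not> w ! (i mod n))"
  show "map Not (rotate j w) = w"
  proof (rule nth_equalityI)
    show "length (map Not (rotate j w)) = length w" by simp
    fix i assume "i < length (map Not (rotate j w))"
    then have i: "i < n" using assms by simp
    have "map Not (rotate j w) ! i = (\<not> w ! ((j + i) mod n))" using i assms by (simp add: nth_rotate)
    also have "\<dots> = w ! i" using h[rule_format, of i] i by (simp add: add.commute)
    finally show "map Not (rotate j w) ! i = w ! i" .
  qed
qed

lemma iter:
  assumes "\<forall>i. w ! ((i + j) mod n) = (\<not> w ! (i mod n))"
  shows "w ! ((i + t * j) mod n) = (if even t then w ! (i mod n) else \<not> w ! (i mod n))"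
proof (induction t)
  case 0 then show ?case by simp
next
  case (Suc t)
  have "w ! ((i + Suc t * j) mod n) = w ! (((i + t * j) + j) mod n)" by (simp add: algebra_simps)
  also have "\<dots> = (\<not> w ! ((i + t * j) mod n))" using assms by blast
  finally show ?case using Suc by simp
qed

lemma fix_odd_empty:
  assumes "n > 0" "odd (n div gcd j n)" "length w = n"
  shows "map Not (rotate j w) \<noteq> w"
proof
  assume "map Not (rotate j w) = w"
  then have P: "\<forall>i. w ! ((i + j) mod n) = (\<not> w ! (i mod n))" using fixP_iff assms by blast
  define g where "g = gcd j n"
  have g0: "g > 0" using assms g_def by simp
  have "(n div g) * j = n * (j div g)"
    unfolding g_def by (metis dvd_div_mult gcd_dvd1 gcd_dvd2 mult.commute dvd_mult_div_cancel)
  then have "w ! ((0 + (n div g) * j) mod n) = w ! (0 mod n)" by simp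
  moreover have "w ! ((0 + (n div g) * j) mod n) = (\<not> w ! (0 mod n))"
    using iter[OF P, of 0 "n div g"] assms(2) g_def by simp
  ultimately show False by simp
qed

lemma fix_even_iff:
  assumes "n > 0" "even (n div gcd j n)" "length w = n"
  shows "(map Not (rotate j w) = w) \<longleftrightarrow>
    (\<forall>i. w ! ((i + gcd j n) mod n) = (\<not> w ! (i mod n)))"
proof -
  define g where "g = gcd j n"
  have g0: "g > 0" using assms g_def by simp
  have gj: "j = (j div g) * g" and gn: "n = (n div g) * g" unfolding g_def by simp_all
  have j0: "j \<noteq> 0"
  proof
    assume "j = 0" then have "n div gcd j n = 1" using assms by simp
    then show False using assms(2) by simp
  qed
  have jodd: "odd (j div g)"
  proof
    assume "even (j div g)"
    then have "2 * g dvd j" using gj by (metis mult.commute mult_dvd_mono dvd_refl)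
    moreover have "2 * g dvd n" using gn assms(2) g_def by (metis mult.commute mult_dvd_mono dvd_refl)
    ultimately have "2 * g dvd g" unfolding g_def by simp
    then show False using g0 dvd_imp_le[of "2*g" g] by simp
  qed
  show ?thesis
  proof
    assume "map Not (rotate j w) = w"
    then have P: "\<forall>i. w ! ((i + j) mod n) = (\<not> w ! (i mod n))" using fixP_iff assms by blast
    obtain x y where xy: "j * x = n * y + g" using bezout_nat[OF j0, of n] g_def by blast
    have E: "(j div g) * x * g = ((n div g) * y + 1) * g"
      using xy gj gn by (metis (no_types, lifting) add_mult_distrib mult.assoc mult.commute mult_1)
    have e: "(j div g) * x = (n div g) * y + 1" using E g0 by (subst (asm) mult_cancel2) simp
    have xodd: "odd x" using e assms(2) g_def by (metis even_add even_mult_iff odd_one)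
    show "\<forall>i. w ! ((i + gcd j n) mod n) = (\<not> w ! (i mod n))"
    proof
      fix i
      have "w ! ((i + x * j) mod n) = (\<not> w ! (i mod n))" using iter[OF P, of i x] xodd by simp
      moreover have "(i + x * j) mod n = (i + g) mod n"
      proof -
        have h: "i + x * j = (i + g) + n * y" using xy by (simp add: mult.commute)
        show ?thesis unfolding h by (rule mod_mult_self2)
      qed
      ultimately show "w ! ((i + gcd j n) mod n) = (\<not> w ! (i mod n))" using g_def by simp
    qed
  next
    assume Q: "\<forall>i. w ! ((i + gcd j n) mod n) = (\<not> w ! (i mod n))"
    have "\<forall>i. w ! ((i + j) mod n) = (\<not> w ! (i mod n))"
    proof
      fix i
      have "w ! ((i + (j div g) * g) mod n) = (\<not> w ! (i mod n))"
        using iter[OF Q, of i "j div g"] jodd g_def by simp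
      then show "w ! ((i + j) mod n) = (\<not> w ! (i mod n))" using gj by simp
    qed
    then show "map Not (rotate j w) = w" using fixP_iff assms by blast
  qed
qed


definition build :: "nat \<Rightarrow> nat \<Rightarrow> bool list \<Rightarrow> bool list" where
  "build n g x = map (\<lambda>i. if even (i div g) then x ! (i mod g) else \<not> x ! (i mod g)) [0..<n]"

lemma card_E:
  assumes g0: "g > 0" and nq: "n = q * g" and qe: "even q" and n0: "n > 0"
  shows "card {w. length w = n \<and> (\<forall>i. w ! ((i + g) mod n) = (\<not> w ! (i mod n)))} = 2 ^ g"
proof -
  define E where "E = {w. length w = n \<and> (\<forall>i. w ! ((i + g) mod n) = (\<not> w ! (i mod n)))}"
  define X where "X = {x :: bool list. set x \<subseteq> UNIV \<and> length x = g}"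
  have q0: "q \<ge> 2" using nq n0 qe by (metis dvd_imp_le gr0I mult_0 neq0_conv even_zero) 
  have gn: "g \<le> n" using nq q0 by simp
  have bE: "build n g x \<in> E" if x: "length x = g" for x
  proof -
    have "build n g x ! ((i + g) mod n) = (\<not> build n g x ! (i mod n))" for i
    proof -
      define i0 where "i0 = i mod n"
      have i0: "i0 < n" using n0 i0_def by simp
      have m: "(i + g) mod n = (i0 + g) mod n" unfolding i0_def by (simp add: mod_add_left_eq)
      define a where "a = i0 div g"
      define r where "r = i0 mod g"
      have ar: "i0 = a * g + r" "r < g" unfolding a_def r_def using g0 by simp_all
      have aq: "a < q" using ar i0 nq by (metis add_lessD1 mult_less_cancel2)
      show ?thesis
      proof (cases "i0 + g < n")
        case True
        have "(i0 + g) mod n = i0 + g" using True by simp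
        moreover have "(i0 + g) div g = a + 1" "(i0 + g) mod g = r"
          using ar g0 by (simp_all add: a_def r_def)
        ultimately show ?thesis using True i0 m unfolding build_def i0_def[symmetric]
          by (simp add: a_def r_def)
      next
        case False
        have "a + 1 \<ge> q"
        proof (rule ccontr)
          assume "\<not> a + 1 \<ge> q"
          then have "a + 2 \<le> q" by simp
          then have "(a + 2) * g \<le> q * g" by (rule mult_le_mono1)
          then show False using False ar nq by (simp add: algebra_simps)
        qed
        then have aq1: "a = q - 1" using aq by simp
        have a1: "a + 1 = q" using aq1 q0 by simp
        have "i0 + g = (a + 1) * g + r" using ar by (simp add: algebra_simps)
        then have e: "i0 + g = n + r" using nq by (simp only: a1)
        have rn: "r < n" using ar gn by simp
        have "(i0 + g) mod n = r" using e rn by simp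
        moreover have "odd a" using aq1 qe q0 by simp
        moreover have "r div g = 0" "r mod g = r" using ar by simp_all
        ultimately show ?thesis using i0 m rn unfolding build_def i0_def[symmetric]
          by (simp add: a_def[symmetric] r_def[symmetric])
      qed
    qed
    then show ?thesis unfolding E_def build_def by simp
  qed
  have bij: "bij_betw (take g) E X"
  proof (rule bij_betw_byWitness[where f' = "build n g"])
    show "\<forall>w\<in>E. build n g (take g w) = w"
    proof
      fix w assume w: "w \<in> E"
      have len: "length w = n" using w E_def by simp
      have Q: "\<And>i. w ! ((i + g) mod n) = (\<not> w ! (i mod n))" using w E_def by simp
      have key: "i < n \<Longrightarrow> w ! i = (if even (i div g) then w ! (i mod g) else \<not> w ! (i mod g))" for i
      proof (induction i rule: less_induct)
        case (less i)
        show ?case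
        proof (cases "i < g")
          case True then show ?thesis by simp
        next
          case False
          define k where "k = i - g"
          have ik: "i = k + g" using False k_def by simp
          have "w ! i = w ! ((k + g) mod n)" using ik less.prems by simp
          also have "\<dots> = (\<not> w ! (k mod n))" by (rule Q)
          also have "k mod n = k" using less.prems ik by simp
          finally have wi: "w ! i = (\<not> w ! k)" .
          have IH: "w ! k = (if even (k div g) then w ! (k mod g) else \<not> w ! (k mod g))"
            using less.IH[of k] ik less.prems g0 by simp
          have "i div g = k div g + 1" "i mod g = k mod g" using ik g0 by simp_all
          then show ?thesis using wi IH by simp
        qed
      qed
      show "build n g (take g w) = w"
      proof (rule nth_equalityI)
        show "length (build n g (take g w)) = length w" using len by (simp add: build_def)
        fix i assume "i < length (build n g (take g w))"
        then have i: "i < n" by (simp add: build_def)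
        have "i mod g < g" using g0 by simp
        then show "build n g (take g w) ! i = w ! i"
          using key[OF i] i gn len by (simp add: build_def)
      qed
    qed
    show "\<forall>x\<in>X. take g (build n g x) = x"
    proof
      fix x assume "x \<in> X"
      then have x: "length x = g" using X_def by simp
      show "take g (build n g x) = x"
        by (rule nth_equalityI) (use x gn in \<open>simp_all add: build_def\<close>)
    qed
    show "take g ` E \<subseteq> X" unfolding E_def X_def using gn by auto
    show "build n g ` X \<subseteq> E" using bE unfolding X_def by auto
  qed
  have "card E = card X" using bij by (rule bij_betw_same_card)
  also have "\<dots> = 2 ^ g" unfolding X_def using card_lists_length_eq[of "UNIV :: bool set" g] by simp
  finally show ?thesis unfolding E_def .
qed




lemma fix_card:
  assumes n0: "n > 0"
  shows "card {w. length w = n \<and> map Not (rotate j w) = w}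
       = (if even (n div gcd j n) then 2 ^ gcd j n else 0)"
proof (cases "even (n div gcd j n)")
  case False
  have e: "{w. length w = n \<and> map Not (rotate j w) = w} = {}"
    using fix_odd_empty[OF n0 False] by auto
  show ?thesis unfolding e using False by simp
next
  case True
  have "{w. length w = n \<and> map Not (rotate j w) = w}
      = {w. length w = n \<and> (\<forall>i. w ! ((i + gcd j n) mod n) = (\<not> w ! (i mod n)))}"
    using fix_even_iff[OF n0 True] by blast
  moreover have "card {w. length w = n \<and> (\<forall>i. w ! ((i + gcd j n) mod n) = (\<not> w ! (i mod n)))} = 2 ^ gcd j n"
    by (rule card_E[where q = "n div gcd j n"]) (use n0 True in simp_all)
  ultimately show ?thesis using True by simp
qed

lemma sum_shift:
  fixes f :: "nat \<Rightarrow> nat"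
  assumes "f 0 = f (n::nat)"
  shows "(\<Sum>j<n. f j) = (\<Sum>j\<in>{0<..n}. f j)"
proof -
  have "(\<Sum>j<Suc n. f j) = f 0 + (\<Sum>j<n. f (Suc j))" by (rule sum.lessThan_Suc_shift)
  moreover have "(\<Sum>j<Suc n. f j) = (\<Sum>j<n. f j) + f n" by simp
  moreover have "(\<Sum>j\<in>{0<..n}. f j) = (\<Sum>j<n. f (Suc j))"
  proof -
    have "{0<..n} = Suc ` {..<n}" using image_Suc_lessThan[of n] atLeastSucAtMost_greaterThanAtMost[of 0 n] by simp
    then show ?thesis by (simp add: sum.reindex)
  qed
  ultimately show ?thesis using assms by simp
qed

lemma sum_gcd:
  fixes F :: "nat \<Rightarrow> nat"
  assumes n0: "n > (0::nat)"
  shows "(\<Sum>j<n. F (gcd j n)) = (\<Sum>g | g dvd n. totient (n div g) * F g)"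
proof -
  have "(\<Sum>j<n. F (gcd j n)) = (\<Sum>j\<in>{0<..n}. F (gcd j n))"
    by (rule sum_shift) simp
  also have "\<dots> = (\<Sum>g\<in>(\<lambda>j. gcd j n) ` {0<..n}. sum (\<lambda>j. F (gcd j n)) {j. j \<in> {0<..n} \<and> gcd j n = g})"
    by (rule sum.image_gen) simp
  also have "(\<lambda>j. gcd j n) ` {0<..n} = {g. g dvd n}"
  proof
    show "(\<lambda>j. gcd j n) ` {0<..n} \<subseteq> {g. g dvd n}" by auto
    show "{g. g dvd n} \<subseteq> (\<lambda>j. gcd j n) ` {0<..n}"
    proof
      fix g assume "g \<in> {g. g dvd n}"
      then have g: "g dvd n" by simp
      have "g > 0" using g n0 by (cases "g = 0") auto
      moreover have "g \<le> n" by (rule dvd_imp_le[OF g n0])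
      moreover have "gcd g n = g" using g by (simp add: gcd_nat.absorb1)
      ultimately have "g \<in> {0<..n}" "g = gcd g n" by simp_all
      then show "g \<in> (\<lambda>j. gcd j n) ` {0<..n}" by (rule rev_image_eqI)
    qed
  qed
  also have "(\<Sum>g | g dvd n. sum (\<lambda>j. F (gcd j n)) {j. j \<in> {0<..n} \<and> gcd j n = g})
           = (\<Sum>g | g dvd n. totient (n div g) * F g)"
  proof (rule sum.cong)
    fix g assume "g \<in> {g. g dvd n}"
    then have g: "g dvd n" by simp
    have "sum (\<lambda>j. F (gcd j n)) {j. j \<in> {0<..n} \<and> gcd j n = g} = sum (\<lambda>j. F g) {j. j \<in> {0<..n} \<and> gcd j n = g}"
      by (rule sum.cong) auto
    also have "\<dots> = card {j\<in>{0<..n}. gcd j n = g} * F g" by simp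
    also have "card {j\<in>{0<..n}. gcd j n = g} = totient (n div g)"
      using card_gcd_eq_totient[OF n0 g] .
    finally show "sum (\<lambda>j. F (gcd j n)) {j. j \<in> {0<..n} \<and> gcd j n = g} = totient (n div g) * F g" .
  qed simp
  finally show ?thesis .
qed

lemma two_adic: "x > (0::nat) \<Longrightarrow> \<exists>t u. x = 2 ^ t * u \<and> odd u"
proof (induction x rule: less_induct)
  case (less x)
  show ?case
  proof (cases "even x")
    case True
    then obtain y where y: "x = 2 * y" by blast
    then have "y < x" "y > 0" using less.prems by auto
    then obtain t u where "y = 2 ^ t * u" "odd u" using less.IH by blast
    then have "x = 2 ^ Suc t * u" using y by simp
    then show ?thesis using \<open>odd u\<close> by blast
  next
    case False
    then have "x = 2 ^ 0 * x" by simp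
    then show ?thesis using False by blast
  qed
qed

lemma two_adic_uniq:
  assumes "2 ^ x * u = 2 ^ y * (v::nat)" "odd u" "odd v"
  shows "x = y"
proof (rule ccontr)
  assume "x \<noteq> y"
  then consider "x < y" | "y < x" by linarith
  then show False
  proof cases
    case 1
    then have "2 ^ x * u = 2 ^ x * (2 ^ (y - x) * v)"
      using assms(1) by (simp add: power_add[symmetric] mult.assoc[symmetric])
    then have "u = 2 ^ (y - x) * v" by simp
    then show False using assms(2) 1 by simp
  next
    case 2
    then have "2 ^ y * v = 2 ^ y * (2 ^ (x - y) * u)"
      using assms(1) by (simp add: power_add[symmetric] mult.assoc[symmetric])
    then have "v = 2 ^ (x - y) * u" by simp
    then show False using assms(3) 2 by simp
  qed
qed

lemma pow_ge: "r \<ge> 2 \<Longrightarrow> r + 2 \<le> (2::nat) ^ r"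
proof (induction r rule: dec_induct)
  case base then show ?case by simp
next
  case (step r) then show ?case by simp
qed

lemma term_dvd:
  assumes eg: "e * g = 2 ^ (a + 1) * m" and m: "odd m" and e: "even e" and g3: "g \<ge> 3"
  shows "2 ^ (a + 2) dvd totient e * 2 ^ g"
proof -
  have e0: "e > 0" and g0: "g > 0" using eg m g3 by (auto intro!: gr0I)
  obtain t oo where to: "e = 2 ^ t * oo" "odd oo" using two_adic[OF e0] by blast
  obtain r q where rq: "g = 2 ^ r * q" "odd q" using two_adic[OF g0] by blast
  have "2 ^ (t + r) * (oo * q) = 2 ^ (a + 1) * m" using eg to rq by (simp add: power_add algebra_simps)
  then have tr: "t + r = a + 1" using two_adic_uniq to rq m by simp
  have t1: "t \<ge> 1" using to e by (cases t) auto
  have "q \<ge> 1" using rq by (cases q) auto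
  then have gr: "g \<ge> 2 ^ r" using rq by simp
  have "g \<ge> r + 2"
  proof (cases "r \<ge> 2")
    case True then show ?thesis using pow_ge[OF True] gr by simp
  next
    case False then show ?thesis using g3 by simp
  qed
  then have le: "a + 2 \<le> (t - 1) + g" using tr t1 by simp
  have "totient (2 ^ t) = 2 ^ (t - 1)" using totient_prime_power[of 2 t] t1 by simp
  moreover have "totient (2 ^ t) dvd totient e" using to by (intro totient_dvd) simp
  ultimately have "2 ^ (t - 1) * 2 ^ g dvd totient e * 2 ^ g" by simp
  moreover have "2 ^ (a + 2) dvd (2::nat) ^ (t - 1) * 2 ^ g"
    unfolding power_add[symmetric] using le by (rule le_imp_power_dvd)
  ultimately show ?thesis using dvd_trans by blast
qed




lemma totient_split:
  assumes "odd m"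
  shows "totient (2 ^ k * m) = totient (2 ^ k) * totient m"
proof -
  have "coprime m 2" using odd_imp_coprime_nat[OF assms] .
  then have "coprime (2 ^ k) m" by (simp add: coprime_commute)
  then show ?thesis by (rule totient_mult_coprime)
qed

lemma totient_2pow: "k > 0 \<Longrightarrow> totient ((2::nat) ^ k) = 2 ^ (k - 1)"
  using totient_prime_power[of 2 k] by simp

lemma main_sum_dvd:
  assumes dm: "d = 2 ^ a * m" and m: "odd m" and d3: "d \<ge> 3"
  shows "2 ^ (a + 2) dvd (\<Sum>g | g dvd (2 * d). totient ((2 * d) div g) * (if even ((2 * d) div g) then 2 ^ g else 0))"
proof -
  define n where "n = 2 * d"
  define T where "T g = totient (n div g) * (if even (n div g) then 2 ^ g else (0::nat))" for g
  define D where "D = {g. g dvd n}"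
  have n0: "n > 0" using d3 n_def by simp
  have fD: "finite D" unfolding D_def using n0 by simp
  have nam: "n = 2 ^ (a + 1) * m" using dm n_def by simp
  have 1: "1 \<in> D" and 2: "2 \<in> D - {1}" unfolding D_def n_def by auto
  have "sum T D = T 1 + sum T (D - {1})" using sum.remove[OF fD 1] .
  also have "sum T (D - {1}) = T 2 + sum T (D - {1} - {2})" using sum.remove[OF _ 2] fD by simp
  finally have split: "sum T D = T 1 + T 2 + sum T (D - {1} - {2})" by simp
  have rest: "2 ^ (a + 2) dvd sum T (D - {1} - {2})"
  proof (rule dvd_sum)
    fix g assume g: "g \<in> D - {1} - {2}"
    then have gd: "g dvd n" "g \<noteq> 1" "g \<noteq> 2" unfolding D_def by auto
    have g0: "g \<noteq> 0" using gd n0 by auto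
    then have g3: "g \<ge> 3" using gd by linarith
    show "2 ^ (a + 2) dvd T g"
    proof (cases "even (n div g)")
      case False then show ?thesis unfolding T_def by simp
    next
      case True
      have "(n div g) * g = 2 ^ (a + 1) * m" using gd(1) nam by simp
      then have "2 ^ (a + 2) dvd totient (n div g) * 2 ^ g"
        using term_dvd[OF _ m True g3] by simp
      then show ?thesis unfolding T_def using True by simp
    qed
  qed
  have T1: "T 1 = 2 ^ (a + 1) * totient m"
  proof -
    have "T 1 = totient n * 2" unfolding T_def n_def by simp
    also have "totient n = 2 ^ a * totient m"
      using totient_split[OF m, of "a + 1"] totient_2pow[of "a + 1"] nam by simp
    finally show ?thesis by simp
  qed
  have "2 ^ (a + 2) dvd T 1 + T 2"
  proof (cases "a = 0")
    case True
    then have "odd d" using dm m by simp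
    then have "T 2 = 0" unfolding T_def n_def by simp
    moreover have "even (totient m)" using totient_even[of m] d3 dm True by simp
    ultimately show ?thesis using T1 True by simp
  next
    case False
    have "even d" using dm False by simp
    then have "T 2 = totient d * 4" unfolding T_def n_def by simp
    also have "totient d = 2 ^ (a - 1) * totient m"
      using totient_split[OF m, of a] totient_2pow[of a] False dm by simp
    finally have "T 2 = 2 ^ (a - 1) * 4 * totient m" by simp
    also have "2 ^ (a - 1) * 4 = (2::nat) ^ (a + 1)"
    proof -
      have "a + 1 = (a - 1) + 2" using False by simp
      then have "(2::nat) ^ (a + 1) = 2 ^ (a - 1) * 2 ^ 2" by (simp only: power_add)
      then show ?thesis by simp
    qed
    finally have "T 1 + T 2 = 2 ^ (a + 2) * totient m" using T1 by simp
    then show ?thesis by simp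
  qed
  then have "2 ^ (a + 2) dvd sum T D" using split rest by simp
  then show ?thesis unfolding T_def D_def n_def .
qed

theorem lemma2p4:
  fixes d :: nat
  assumes "d > 2"
  shows "even (card (necklaces d))"
proof -
  define N where "N = necklaces d"
  define f where "f X = map Not ` X" for X :: "bool list set"
  define S where "S = card {X \<in> N. f X = X}"
  have d0: "d > 0" using assms by simp
  obtain a m where am: "d = 2 ^ a * m" "odd m" using two_adic[OF d0] by blast
  define n where "n = 2 * d"
  have n0: "n > 0" using d0 n_def by simp
  have "(\<Sum>j<n. card {w. length w = n \<and> map Not (rotate j w) = w}) = n * S"
    using burnside[OF d0] unfolding n_def S_def N_def f_def by simp
  moreover have "(\<Sum>j<n. card {w. length w = n \<and> map Not (rotate j w) = w})
     = (\<Sum>j<n. (\<lambda>g. if even (n div g) then 2 ^ g else 0) (gcd j n))"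
    using fix_card[OF n0] by simp
  moreover have "\<dots> = (\<Sum>g | g dvd n. totient (n div g) * (if even (n div g) then 2 ^ g else 0))"
    by (rule sum_gcd[OF n0])
  ultimately have eq: "n * S = (\<Sum>g | g dvd n. totient (n div g) * (if even (n div g) then 2 ^ g else 0))"
    by simp
  have "2 ^ (a + 2) dvd (\<Sum>g | g dvd n. totient (n div g) * (if even (n div g) then 2 ^ g else 0))"
    using main_sum_dvd[OF am] assms unfolding n_def by simp
  then have "2 ^ (a + 2) dvd n * S" by (simp only: eq)
  then have "2 ^ (a + 1) * 2 dvd 2 ^ (a + 1) * (m * S)" using am n_def by (simp add: algebra_simps)
  then have "2 dvd m * S" by (subst (asm) nat_mult_dvd_cancel_disj) simp
  then have evS: "even S" using am(2) by simp
  have fin: "finite N"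
  proof -
    have "balanced_words d \<subseteq> {w. length w = 2 * d}" unfolding balanced_words_def by auto
    then have "finite (balanced_words d)" using finite_len finite_subset by blast
    then show ?thesis unfolding N_def necklaces_eq by simp
  qed
  have inN: "f X \<in> N" if XN: "X \<in> N" for X
  proof -
    obtain w where w: "w \<in> balanced_words d" "X = orb w" using XN unfolding N_def necklaces_eq by auto
    then have "f X = orb (map Not w)" unfolding f_def by (simp add: orb_map)
    then show ?thesis using not_in_bw[OF w(1)] unfolding N_def necklaces_eq by simp
  qed
  have inv: "f (f X) = X" for X unfolding f_def by (simp add: image_image comp_def)
  have ev2: "even (card {X \<in> N. f X \<noteq> X})"
    by (rule involution_parity[OF fin inN inv])
  have U: "N = {X \<in> N. f X = X} \<union> {X \<in> N. f X \<noteq> X}" by auto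
  have "card ({X \<in> N. f X = X} \<union> {X \<in> N. f X \<noteq> X}) = card {X \<in> N. f X = X} + card {X \<in> N. f X \<noteq> X}"
    by (rule card_Un_disjoint) (use fin in auto)
  then have "card N = S + card {X \<in> N. f X \<noteq> X}"
    unfolding S_def using U by simp
  then show ?thesis using evS ev2 unfolding N_def by simp
qed


end
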